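(* There exists an uncountable semigroup $(S,+)$ which is very weakly cancellative, has no idempotent element, and in which every uncountable subset of $S$ is an IP set.
   Context: For an infinite semigroup $S$ of cardinality $\kappa$: a left solution set is a set $\{x\in S: a+x=b\}$ and a right solution set is a set $\{x\in S: x+a=b\}$ for some $a,b\in S$; $S$ is very weakly cancellative if the union of fewer than $\kappa$ left solution sets has cardinality less than $\kappa$ and the union of fewer than $\kappa$ right solution sets has cardinality less than $\kappa$. $e$ is idempotent if $e+e=e$. $A\subseteq S$ is an IP set if there is a sequence $\langle x_n\rangle_{n=1}^\infty$ in $S$ such that every finite sum $\sum_{n\in H}x_n$ (in increasing order of indices, $H$ a nonempty finite subset of $\mathbb{N}$) lies in $A$. *)

theory Defs
  imports Complex_Main "HOL-Library.Countable_Set"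
begin

definition semigroup_on :: "'a set \<Rightarrow> ('a \<Rightarrow> 'a \<Rightarrow> 'a) \<Rightarrow> bool" where
  "semigroup_on S f \<longleftrightarrow> (\<forall>x\<in>S. \<forall>y\<in>S. f x y \<in> S) \<and>
     (\<forall>x\<in>S. \<forall>y\<in>S. \<forall>z\<in>S. f (f x y) z = f x (f y z))"

definition left_sol :: "'a set \<Rightarrow> ('a \<Rightarrow> 'a \<Rightarrow> 'a) \<Rightarrow> 'a \<Rightarrow> 'a \<Rightarrow> 'a set" where
  "left_sol S f a b = {x \<in> S. f a x = b}"

definition right_sol :: "'a set \<Rightarrow> ('a \<Rightarrow> 'a \<Rightarrow> 'a) \<Rightarrow> 'a \<Rightarrow> 'a \<Rightarrow> 'a set" where
  "right_sol S f a b = {x \<in> S. f x a = b}"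

definition very_weakly_cancellative :: "'a set \<Rightarrow> ('a \<Rightarrow> 'a \<Rightarrow> 'a) \<Rightarrow> bool" where
  "very_weakly_cancellative S f \<longleftrightarrow>
     (\<forall>\<A>. \<A> \<subseteq> {left_sol S f a b | a b. a \<in> S \<and> b \<in> S} \<and> ordLess2 (card_of \<A>) (card_of S)
          \<longrightarrow> ordLess2 (card_of (\<Union>\<A>)) (card_of S)) \<and>
     (\<forall>\<A>. \<A> \<subseteq> {right_sol S f a b | a b. a \<in> S \<and> b \<in> S} \<and> ordLess2 (card_of \<A>) (card_of S)
          \<longrightarrow> ordLess2 (card_of (\<Union>\<A>)) (card_of S))"

definition idempotent_in :: "'a set \<Rightarrow> ('a \<Rightarrow> 'a \<Rightarrow> 'a) \<Rightarrow> 'a \<Rightarrow> bool" where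
  "idempotent_in S f e \<longleftrightarrow> e \<in> S \<and> f e e = e"

fun lsum :: "('a \<Rightarrow> 'a \<Rightarrow> 'a) \<Rightarrow> 'a list \<Rightarrow> 'a" where
  "lsum f [] = undefined"
| "lsum f [x] = x"
| "lsum f (x # y # xs) = f x (lsum f (y # xs))"

definition fin_sum :: "('a \<Rightarrow> 'a \<Rightarrow> 'a) \<Rightarrow> (nat \<Rightarrow> 'a) \<Rightarrow> nat set \<Rightarrow> 'a" where
  "fin_sum f x H = lsum f (map x (sorted_list_of_set H))"

definition IP_set :: "'a set \<Rightarrow> ('a \<Rightarrow> 'a \<Rightarrow> 'a) \<Rightarrow> 'a set \<Rightarrow> bool" where
  "IP_set S f A \<longleftrightarrow> (\<exists>x :: nat \<Rightarrow> 'a. (\<forall>n. x n \<in> S) \<and>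
      (\<forall>H. finite H \<and> H \<noteq> {} \<longrightarrow> fin_sum f x H \<in> A))"

end

theory Submission imports Defs "HOL-Analysis.Continuum_Not_Denumerable" begin
unbundle cardinal_syntax

lemma countable_ordLess:
  assumes "\<not> countable S" "countable X" shows "|X| <o |S|"
proof -
  have "\<not> |S| \<le>o |UNIV::nat set|"
    using assms(1) unfolding countable_def card_of_ordLeq[symmetric] by auto
  hence "|UNIV::nat set| <o |S|"
    using ordLess_or_ordLeq[OF card_of_Well_order card_of_Well_order, of "UNIV::nat set" S] by blast
  moreover have "|X| \<le>o |UNIV::nat set|"
    using assms(2) unfolding countable_def card_of_ordLeq[symmetric] by auto
  ultimately show ?thesis using ordLeq_ordLess_trans by blast
qed

lemma card_aux:
  assumes "\<not> countable S" "\<forall>X\<in>\<A>. countable X" "|\<A>| <o |S|"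
  shows "|\<Union>\<A>| <o |S|"
proof (cases "countable \<A>")
  case True
  have "countable (\<Union>\<A>)" using countable_UN[OF True, of "\<lambda>X. X"] assms(2) by simp
  then show ?thesis using assms(1) by (rule countable_ordLess[rotated])
next
  case False
  hence inf: "\<not> finite \<A>" using countable_finite by blast
  have "\<not> |\<A>| \<le>o |UNIV::nat set|"
    using False unfolding countable_def card_of_ordLeq[symmetric] by auto
  hence nl: "|UNIV::nat set| \<le>o |\<A>|"
    using ordLess_or_ordLeq[OF card_of_Well_order card_of_Well_order, of "UNIV::nat set" \<A>] ordLess_imp_ordLeq by blast
  have "\<forall>X\<in>\<A>. |X| \<le>o |\<A>|"
  proof
    fix X assume "X \<in> \<A>"
    hence "|X| \<le>o |UNIV::nat set|"
      using assms(2) unfolding countable_def card_of_ordLeq[symmetric] by auto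
    thus "|X| \<le>o |\<A>|" using nl ordLeq_transitive by blast
  qed
  hence "|\<Union>X\<in>\<A>. X| \<le>o |\<A>|"
    using card_of_UNION_ordLeq_infinite[OF inf, of \<A> "\<lambda>X. X"] ordLeq_refl[OF card_of_Card_order] by auto
  thus ?thesis using assms(3) ordLeq_ordLess_trans by auto
qed

lemma lsum_chain:
  assumes "\<And>i j. i < j \<Longrightarrow> f (x i) (x j) = x j"
  shows "sorted_wrt (<) l \<Longrightarrow> l \<noteq> [] \<Longrightarrow> lsum f (map x l) = x (last l)"
proof (induction l)
  case Nil then show ?case by simp
next
  case (Cons a l)
  show ?case
  proof (cases l)
    case Nil then show ?thesis by simp
  next
    case (Cons b l')
    have "a < last l" using Cons.prems \<open>l = b # l'\<close> by (simp) 
    have "lsum f (map x (a # l)) = f (x a) (lsum f (map x l))" using \<open>l = b # l'\<close> by simp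
    also have "\<dots> = f (x a) (x (last l))" using Cons.IH Cons.prems \<open>l = b # l'\<close> by simp
    also have "\<dots> = x (last l)" using assms \<open>a < last l\<close> by blast
    finally show ?thesis using \<open>l = b # l'\<close> by simp
  qed
qed


lemma countable_frac_fiber:
  assumes "countable P"
  shows "countable {x::real. 0 \<le> x \<and> frac x \<in> P}"
proof -
  have "{x::real. 0 \<le> x \<and> frac x \<in> P} \<subseteq> (\<lambda>(p,n). p + real n) ` (P \<times> UNIV)"
  proof
    fix x :: real assume x: "x \<in> {x. 0 \<le> x \<and> frac x \<in> P}"
    hence "0 \<le> floor x" by auto
    hence "x = frac x + real (nat (floor x))" by (simp add: frac_def)
    moreover have "(frac x, nat (floor x)) \<in> P \<times> UNIV" using x by auto
    ultimately show "x \<in> (\<lambda>(p,n). p + real n) ` (P \<times> UNIV)"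
      by (metis (no_types, lifting) case_prod_conv rev_image_eqI)
  qed
  moreover have "countable ((\<lambda>(p,n). p + real n) ` (P \<times> (UNIV::nat set)))"
    using assms by auto
  ultimately show ?thesis using countable_subset by blast
qed

definition sh :: "real \<Rightarrow> int \<Rightarrow> real" where
  "sh y k = y + of_int (k + 1)"

lemma frac_sh[simp]: "frac (sh y k) = frac y"
  unfolding sh_def by (rule frac_add_of_int_right)

lemma floor_sh[simp]: "floor (sh y k) = floor y + k + 1"
  unfolding sh_def by (metis add.assoc floor_add_int)

definition opr :: "real rel \<Rightarrow> real \<Rightarrow> real \<Rightarrow> real" where
  "opr r x y = (if frac x = frac y then sh y (floor x)
                else if (frac x, frac y) \<in> r then y else x)"

lemma frac_opr:
  "frac (opr r x y) = (if frac x = frac y then frac x else if (frac x, frac y) \<in> r then frac y else frac x)"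
  unfolding opr_def by simp

lemma opr_ne: "frac a \<noteq> frac b \<Longrightarrow> opr r a b = (if (frac a, frac b) \<in> r then b else a)"
  unfolding opr_def by simp

lemma opr_assoc:
  assumes tot: "\<And>x y. x \<noteq> y \<Longrightarrow> (x,y) \<in> r \<or> (y,x) \<in> r"
    and anti: "\<And>x y. (x,y) \<in> r \<Longrightarrow> (y,x) \<in> r \<Longrightarrow> x = y"
    and tr: "\<And>x y z. (x,y) \<in> r \<Longrightarrow> (y,z) \<in> r \<Longrightarrow> (x,z) \<in> r"
  shows "opr r (opr r x y) z = opr r x (opr r y z)"
proof (cases "frac x = frac y \<and> frac y = frac z")
  case True
  have 1: "opr r x y = sh y (floor x)" "opr r y z = sh z (floor y)" using True by (simp_all add: opr_def)
  have 2: "opr r (sh y (floor x)) z = sh z (floor y + floor x + 1)" using True by (simp add: opr_def)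
  have 3: "opr r x (sh z (floor y)) = sh (sh z (floor y)) (floor x)" using True by (simp add: opr_def)
  show ?thesis unfolding 1 2 3 by (simp add: sh_def)
next
  case False
  have eqc: "frac a = frac b \<Longrightarrow> opr r a b = sh b (floor a)" for a b
    unfolding opr_def by simp
  show ?thesis
  proof (cases "frac x = frac y")
    case pq: True
    hence qu: "frac y \<noteq> frac z" using False by simp
    have 1: "opr r x y = sh y (floor x)" using pq eqc by simp
    show ?thesis
    proof (cases "(frac y, frac z) \<in> r")
      case True
      thus ?thesis unfolding 1 using 1 pq qu by (simp add: opr_ne)
    next
      case nr: False
      thus ?thesis unfolding 1 using 1 pq qu by (simp add: opr_ne)
    qed
  next
    case pq: False
    show ?thesis
    proof (cases "frac y = frac z")
      case qu: True
      have 1: "opr r y z = sh z (floor y)" using qu eqc by simp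
      show ?thesis
      proof (cases "(frac x, frac y) \<in> r")
        case True
        thus ?thesis unfolding 1 using 1 pq qu by (simp add: opr_ne)
      next
        case nr: False
        thus ?thesis unfolding 1 using 1 pq qu by (simp add: opr_ne)
      qed
    next
      case qu: False
      show ?thesis
      proof (cases "frac x = frac z")
        case pu: True
        show ?thesis
        proof (cases "(frac x, frac y) \<in> r")
          case True
          hence "(frac y, frac z) \<notin> r" using anti[of "frac x" "frac y"] pu pq by auto
          thus ?thesis using True pq qu pu by (simp add: opr_ne)
        next
          case nr: False
          hence "(frac y, frac z) \<in> r" using tot[of "frac x" "frac y"] pu pq by auto
          thus ?thesis using nr pq qu pu eqc by (simp add: opr_ne)
        qed
      next
        case pu: False
        show ?thesis
        proof (cases "(frac x, frac y) \<in> r")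
          case xy: True
          show ?thesis
          proof (cases "(frac y, frac z) \<in> r")
            case True
            hence "(frac x, frac z) \<in> r" using tr xy by blast
            thus ?thesis using True xy pq qu pu by (simp add: opr_ne)
          next
            case False
            thus ?thesis using xy pq qu pu by (simp add: opr_ne)
          qed
        next
          case yx: False
          hence yx': "(frac y, frac x) \<in> r" using tot pq by blast
          show ?thesis
          proof (cases "(frac y, frac z) \<in> r")
            case True
            thus ?thesis using yx pq qu pu by (simp add: opr_ne)
          next
            case False
            hence "(frac z, frac y) \<in> r" using tot qu by blast
            hence "(frac z, frac x) \<in> r" using tr yx' by blast
            hence "(frac x, frac z) \<notin> r" using anti pu by blast
            thus ?thesis using False yx pq qu pu by (simp add: opr_ne)
          qed
        qed
      qed
    qed
  qed
qed

lemma main: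
  fixes r :: "real rel"
  assumes tot: "\<And>x y. x \<noteq> y \<Longrightarrow> (x,y) \<in> r \<or> (y,x) \<in> r"
    and refl: "\<And>x. (x,x) \<in> r"
    and anti: "\<And>x y. (x,y) \<in> r \<Longrightarrow> (y,x) \<in> r \<Longrightarrow> x = y"
    and tr: "\<And>x y z. (x,y) \<in> r \<Longrightarrow> (y,z) \<in> r \<Longrightarrow> (x,z) \<in> r"
    and wf: "wf (r - Id)"
  shows "\<exists>(S :: real set) (f :: real \<Rightarrow> real \<Rightarrow> real).
           semigroup_on S f \<and> \<not> countable S \<and> very_weakly_cancellative S f \<and>
           \<not> (\<exists>e. idempotent_in S f e) \<and>
           (\<forall>A. A \<subseteq> S \<and> \<not> countable A \<longrightarrow> IP_set S f A)"
proof -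
  define U where "U = {0..<1::real}"
  define T where "T = {x \<in> U. countable {y \<in> U. (y,x) \<in> r}}"
  define S where "S = {x::real. 0 \<le> x \<and> frac x \<in> T}"
  define f where "f = opr r"
  have TU: "T \<subseteq> U" unfolding T_def by auto
  have Tpred: "countable {p \<in> T. (p,t) \<in> r}" if "t \<in> T" for t
  proof -
    have "{p \<in> T. (p,t) \<in> r} \<subseteq> {y \<in> U. (y,t) \<in> r}" using TU by auto
    thus ?thesis using that countable_subset unfolding T_def by blast
  qed
  have Tunc: "\<not> countable T"
  proof
    assume cT: "countable T"
    have "\<not> countable U" unfolding U_def using uncountable_half_open_interval_1 by auto
    hence "U - T \<noteq> {}" using cT countable_subset[of U T] by auto
    then obtain z where z: "z \<in> U - T" and zmin: "\<And>y. (y,z) \<in> r - Id \<Longrightarrow> y \<notin> U - T"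
      using wf wf_eq_minimal[of "r - Id"] by (metis ex_in_conv)
    have "{y \<in> U. (y,z) \<in> r} \<subseteq> insert z T" using zmin by auto
    hence "countable {y \<in> U. (y,z) \<in> r}" using cT countable_subset by (metis countable_insert)
    hence "z \<in> T" using z unfolding T_def by auto
    thus False using z by auto
  qed
  have TS: "T \<subseteq> S" using TU unfolding S_def U_def by auto
  have Sunc: "\<not> countable S" using Tunc TS countable_subset[of T S] by auto
  have closed: "f x y \<in> S" if "x \<in> S" "y \<in> S" for x y
  proof -
    have "0 \<le> frac x" "frac x < 1" by (simp_all add: frac_lt_1)
    hence "0 \<le> sh y (floor x)" using that unfolding S_def sh_def by auto
    moreover have "frac (f x y) \<in> T" using that unfolding S_def f_def frac_opr by auto
    ultimately show ?thesis using that unfolding S_def f_def opr_def by auto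
  qed
  have assoc: "f (f x y) z = f x (f y z)" for x y z
    unfolding f_def by (rule opr_assoc[OF tot anti tr])
  have sg: "semigroup_on S f" unfolding semigroup_on_def using closed assoc by blast
  have sol: "frac x = frac b \<or> (frac x, frac a) \<in> r" if "f a x = b \<or> f x a = b" for a b x
    using that tot frac_opr[of r a x] frac_opr[of r x a] unfolding f_def opr_def
    by (auto split: if_splits)
  have solc: "countable X" if hX: "X \<in> {left_sol S f a b | a b. a \<in> S \<and> b \<in> S} \<or>
     X \<in> {right_sol S f a b | a b. a \<in> S \<and> b \<in> S}" for X
  proof -
    obtain a b where ab: "a \<in> S" "b \<in> S" and X: "X = left_sol S f a b \<or> X = right_sol S f a b"
      using hX by blast
    let ?P = "insert (frac b) {p \<in> T. (p, frac a) \<in> r}"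
    have cP: "countable ?P" using Tpred ab unfolding S_def by auto
    have "X \<subseteq> {x. 0 \<le> x \<and> frac x \<in> ?P}"
      using X sol[of a _ b] unfolding left_sol_def right_sol_def S_def by auto
    thus ?thesis using countable_frac_fiber[OF cP] countable_subset by auto
  qed
  have vwc: "very_weakly_cancellative S f"
    unfolding very_weakly_cancellative_def
  proof (intro conjI allI impI)
    fix \<A> assume h: "\<A> \<subseteq> {left_sol S f a b |a b. a \<in> S \<and> b \<in> S} \<and> |\<A>| <o |S|"
    have "\<forall>X\<in>\<A>. countable X"
    proof
      fix X assume "X \<in> \<A>"
      hence "X \<in> {left_sol S f a b |a b. a \<in> S \<and> b \<in> S}" using h by (meson subsetD)
      thus "countable X" by (intro solc disjI1)
    qed
    thus "|\<Union>\<A>| <o |S|" using card_aux[OF Sunc] h by auto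
  next
    fix \<A> assume h: "\<A> \<subseteq> {right_sol S f a b |a b. a \<in> S \<and> b \<in> S} \<and> |\<A>| <o |S|"
    have "\<forall>X\<in>\<A>. countable X"
    proof
      fix X assume "X \<in> \<A>"
      hence "X \<in> {right_sol S f a b |a b. a \<in> S \<and> b \<in> S}" using h by (meson subsetD)
      thus "countable X" by (intro solc disjI2)
    qed
    thus "|\<Union>\<A>| <o |S|" using card_aux[OF Sunc] h by auto
  qed
  have noid: "\<not> (\<exists>e. idempotent_in S f e)"
  proof
    assume "\<exists>e. idempotent_in S f e"
    then obtain e where e: "e \<in> S" "f e e = e" unfolding idempotent_in_def by blast
    hence "0 \<le> floor e" unfolding S_def by auto
    hence "frac e \<le> e" by (simp add: frac_def)
    thus False using e \<open>0 \<le> floor e\<close> unfolding f_def opr_def sh_def by auto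
  qed
  have ip: "IP_set S f A" if A: "A \<subseteq> S" "\<not> countable A" for A
  proof -
    have ex: "\<exists>a\<in>A. (frac a, t) \<notin> r" if "t \<in> T" for t
    proof (rule ccontr)
      assume "\<not> ?thesis"
      hence "A \<subseteq> {x. 0 \<le> x \<and> frac x \<in> {p \<in> T. (p,t) \<in> r}}" using A unfolding S_def by auto
      thus False using countable_frac_fiber[OF Tpred[OF that]] countable_subset A(2) by auto
    qed
    obtain a0 where a0: "a0 \<in> A" using A by (metis countable_empty ex_in_conv)
    define x where "x = rec_nat a0 (\<lambda>n prev. SOME a. a \<in> A \<and> (frac a, frac prev) \<notin> r)"
    have nxt: "x (Suc n) \<in> A \<and> (frac (x (Suc n)), frac (x n)) \<notin> r" if "x n \<in> A" for n
    proof -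
      have "frac (x n) \<in> T" using that A unfolding S_def by auto
      then obtain a where "a \<in> A \<and> (frac a, frac (x n)) \<notin> r" using ex by blast
      thus ?thesis unfolding x_def by simp (rule someI)
    qed
    have xA1: "x n \<in> A" for n
      by (induction n) (use a0 nxt in \<open>simp_all add: x_def\<close>)
    have xA: "x n \<in> A \<and> (frac (x (Suc n)), frac (x n)) \<notin> r" for n
      using xA1 nxt by blast
    have step: "(frac (x n), frac (x (Suc n))) \<in> r \<and> frac (x n) \<noteq> frac (x (Suc n))" for n
      using xA[of n] tot refl by metis
    have chain: "(frac (x i), frac (x j)) \<in> r \<and> frac (x i) \<noteq> frac (x j)" if "i < j" for i j
      using that
    proof (induction j)
      case 0 then show ?case by simp
    next
      case (Suc j)
      show ?case
      proof (cases "i = j")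
        case True then show ?thesis using step by simp
      next
        case False
        hence "(frac (x i), frac (x j)) \<in> r \<and> frac (x i) \<noteq> frac (x j)" using Suc by simp
        then show ?thesis using step[of j] tr anti by metis
      qed
    qed
    have absorb: "f (x i) (x j) = x j" if "i < j" for i j
      using chain[OF that] unfolding f_def opr_def by auto
    show ?thesis unfolding IP_set_def
    proof (intro exI[of _ x] conjI allI impI)
      fix n show "x n \<in> S" using xA A by blast
    next
      fix H :: "nat set" assume H: "finite H \<and> H \<noteq> {}"
      have "fin_sum f x H = x (last (sorted_list_of_set H))"
        unfolding fin_sum_def
        using lsum_chain[of f x, OF absorb] H strict_sorted_list_of_set[of H]
          sorted_list_of_set_eq_Nil_iff[of H] by auto
      thus "fin_sum f x H \<in> A" using xA by simp
    qed
  qed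
  show ?thesis using sg Sunc vwc noid ip by blast
qed

theorem theorem2p7:
  shows "\<exists>(S :: real set) (f :: real \<Rightarrow> real \<Rightarrow> real).
           semigroup_on S f \<and> \<not> countable S \<and> very_weakly_cancellative S f \<and>
           \<not> (\<exists>e. idempotent_in S f e) \<and>
           (\<forall>A. A \<subseteq> S \<and> \<not> countable A \<longrightarrow> IP_set S f A)"
proof -
  obtain r :: "real rel" where r: "Well_order r" "Field r = UNIV"
    using well_ordering[where ?'a=real] by auto
  have wo: "well_order_on UNIV r" using r by simp
  have lo: "linear_order_on UNIV r" and wf: "wf (r - Id)"
    using wo unfolding well_order_on_def by simp_all
  have po: "partial_order_on UNIV r" and to: "total_on UNIV r"
    using lo unfolding linear_order_on_def by simp_all
  have pr: "preorder_on UNIV r" and an: "antisym r"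
    using po unfolding partial_order_on_def by simp_all
  have rf: "refl_on UNIV r" and trn: "trans r"
    using pr unfolding preorder_on_def by simp_all
  have tot: "\<And>x y. x \<noteq> y \<Longrightarrow> (x,y) \<in> r \<or> (y,x) \<in> r"
    using to unfolding total_on_def by simp
  have refl: "\<And>x. (x,x) \<in> r"
    using rf unfolding refl_on_def by simp
  have anti: "\<And>x y. (x,y) \<in> r \<Longrightarrow> (y,x) \<in> r \<Longrightarrow> x = y"
    using an unfolding antisym_def by simp
  have tr: "\<And>x y z. (x,y) \<in> r \<Longrightarrow> (y,z) \<in> r \<Longrightarrow> (x,z) \<in> r"
    using trn unfolding trans_def by metis
  show ?thesis by (rule main[OF tot refl anti tr wf])
qed

end
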